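(* Let $n\ge1$, $K\ge1$ and $p_n\in[0,1]$. Let $(\mathcal{G}(n),\mathcal{A}_1(n),\dots,\mathcal{A}_K(n))$ be the output of the SFAP exploration algorithm, and let $\mathcal{N}_i(n)$ be the set of vertices using frequency $i$ in the final state of the SFAP model on $G(n,p_n)$ (both described in the context). Then the joint distribution of $(\mathcal{G}(n),\mathcal{A}_1(n),\dots,\mathcal{A}_K(n))$ is identical to that of $(G(n,p_n),\mathcal{N}_1(n),\dots,\mathcal{N}_K(n))$.
   Context: $G(n,p_n)$ is the Erdős–Rényi random graph on $[n]$ with independent edge probability $p_n$. SFAP (sequential frequency assignment) model: given a realization of $G(n,p_n)$, all vertices start with no frequency ($f_v(0)=0$). At each step a vertex $v$ is chosen uniformly at random among vertices not selected before; if the set $\{1,\dots,K\}\setminus\{f_u: u \text{ a neighbour of } v,\ f_u\ne0\}$ is nonempty, $v$ receives its minimum as frequency; otherwise $v$ gets frequency $0$ (frozen). $\mathcal{N}_i(n)$ is the set of vertices with frequency $i$ after $n$ steps. SFAP exploration algorithm: maintain $\mathcal{A}_k(t)$ ($1\le k\le K$: explored vertices with frequency $k$; $\mathcal{A}_0(t)$: explored frozen vertices) and unexplored set $\mathcal{U}(t)$, initially $\mathcal{A}_k(0)=\varnothing$, $\mathcal{U}(0)=[n]$. At step $t+1$, select $v\in\mathcal{U}(t)$ uniformly at random, remove it from $\mathcal{U}$, and join it to each vertex of $\mathcal{A}(t)=\bigcup_{k=0}^K\mathcal{A}_k(t)$ independently with probability $p_n$. If $\mathcal{F}_v=\{1,\dots,K\}\setminus\{k\ge1: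 v\text{ joined to some vertex of }\mathcal{A}_k(t)\}$ is nonempty, $v$ joins $\mathcal{A}_{\min\mathcal{F}_v}$; otherwise $v$ joins $\mathcal{A}_0$. After $n$ steps the algorithm outputs $(\mathcal{A}_1(n),\dots,\mathcal{A}_K(n))$ and the graph $\mathcal{G}(n)$ on $[n]$ of all edges added. *)

theory Defs
  imports "HOL-Probability.Probability" "HOL-Combinatorics.Multiset_Permutations"
begin

text \<open>Vertex set [n] = {1..n}. A graph on [n] is a set of edges, each edge a
two-element set {u,v} with u \<noteq> v. Frequency 0 means "no frequency / frozen".\<close>

definition all_edges :: "nat \<Rightarrow> nat set set" where
  "all_edges n = {{u, v} | u v. u \<in> {1..n} \<and> v \<in> {1..n} \<and> u \<noteq> v}"

definition erdos_renyi :: "nat \<Rightarrow> real \<Rightarrow> nat set set pmf" where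
  "erdos_renyi n p =
     map_pmf (\<lambda>b. {e \<in> all_edges n. b e}) (Pi_pmf (all_edges n) False (\<lambda>_. bernoulli_pmf p))"

definition sfap_assign :: "nat \<Rightarrow> nat set set \<Rightarrow> nat \<Rightarrow> (nat \<Rightarrow> nat) \<Rightarrow> (nat \<Rightarrow> nat)" where
  "sfap_assign K E v f =
     (let F = {1..K} - {f u | u. {u, v} \<in> E \<and> f u \<noteq> 0}
      in f(v := (if F = {} then 0 else Min F)))"

definition sfap_freq :: "nat \<Rightarrow> nat set set \<Rightarrow> nat list \<Rightarrow> (nat \<Rightarrow> nat)" where
  "sfap_freq K E ord_list = fold (sfap_assign K E) ord_list (\<lambda>_. 0)"

text \<open>SFAP model on G(n,p): the ord_list in which vertices are selected (uniformly among
  not-yet-selected vertices) is a uniform random permutation of [n], independent of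
  the graph.\<close>
definition sfap_model :: "nat \<Rightarrow> nat \<Rightarrow> real \<Rightarrow> (nat set set \<times> nat set list) pmf" where
  "sfap_model n K p =
     do { E \<leftarrow> erdos_renyi n p;
          ord_list \<leftarrow> pmf_of_set (permutations_of_set {1..n});
          let f = sfap_freq K E ord_list;
          return_pmf (E, map (\<lambda>i. {v \<in> {1..n}. f v = i}) [1..<K+1]) }"

text \<open>State of the exploration algorithm: (explored set, frequency map, edges so far).
  Explored vertices v have f v = k \<in> {1..K} (i.e. v \<in> A_k) or f v = 0 (v \<in> A_0);
  the unexplored set is U = [n] minus the explored set.\<close>
type_synonym explore_state = "nat set \<times> (nat \<Rightarrow> nat) \<times> nat set set"

definition explore_step :: "nat \<Rightarrow> nat \<Rightarrow> real \<Rightarrow> explore_state \<Rightarrow> explore_state pmf" where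
  "explore_step n K p s =
     (case s of (X, f, E) \<Rightarrow>
       if {1..n} - X = {} then return_pmf s
       else do { v \<leftarrow> pmf_of_set ({1..n} - X);
                 b \<leftarrow> Pi_pmf X False (\<lambda>_. bernoulli_pmf p);
                 let F = {1..K} - {f u | u. u \<in> X \<and> b u \<and> f u \<ge> 1};
                 return_pmf (insert v X,
                             f(v := (if F = {} then 0 else Min F)),
                             E \<union> {{u, v} | u. u \<in> X \<and> b u}) })"

fun explore_iter :: "nat \<Rightarrow> nat \<Rightarrow> real \<Rightarrow> nat \<Rightarrow> explore_state pmf" where
  "explore_iter n K p 0 = return_pmf ({}, (\<lambda>_. 0), {})"
| "explore_iter n K p (Suc t) = bind_pmf (explore_iter n K p t) (explore_step n K p)"

definition explore_output :: "nat \<Rightarrow> nat \<Rightarrow> real \<Rightarrow> (nat set set \<times> nat set list) pmf" where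
  "explore_output n K p =
     map_pmf (\<lambda>(X, f, E). (E, map (\<lambda>i. {v \<in> X. f v = i}) [1..<K+1])) (explore_iter n K p n)"

end

theory Submission
  imports Defs
begin


definition edges_on :: "nat set \<Rightarrow> nat set set" where
  "edges_on S = {{u, v} | u v. u \<in> S \<and> v \<in> S \<and> u \<noteq> v}"

lemma assign_other: "u \<noteq> w \<Longrightarrow> sfap_assign K E w g u = g u"
  by (simp add: sfap_assign_def Let_def)

lemma fold_assign_outside: "u \<notin> set xs \<Longrightarrow> fold (sfap_assign K E) xs g u = g u"
  by (induction xs arbitrary: g) (auto simp: assign_other)

lemma assign_extra:
  assumes "w \<noteq> v" "g v = 0" "\<forall>e\<in>N. v \<in> e"
  shows "sfap_assign K (E \<union> N) w g = sfap_assign K E w g"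
proof -
  have "{g u | u. {u, w} \<in> E \<union> N \<and> g u \<noteq> 0} = {g u | u. {u, w} \<in> E \<and> g u \<noteq> 0}"
  proof (intro equalityI subsetI)
    fix x assume "x \<in> {g u | u. {u, w} \<in> E \<union> N \<and> g u \<noteq> 0}"
    then obtain u where u: "x = g u" "{u, w} \<in> E \<union> N" "g u \<noteq> 0" by auto
    have "{u, w} \<notin> N"
    proof
      assume "{u, w} \<in> N"
      then have "v \<in> {u, w}" using assms(3) by auto
      then have "u = v" using assms(1) by auto
      then show False using u(3) assms(2) by simp
    qed
    then show "x \<in> {g u | u. {u, w} \<in> E \<and> g u \<noteq> 0}" using u by auto
  next
    fix x assume "x \<in> {g u | u. {u, w} \<in> E \<and> g u \<noteq> 0}"
    then show "x \<in> {g u | u. {u, w} \<in> E \<union> N \<and> g u \<noteq> 0}" by auto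
  qed
  then show ?thesis unfolding sfap_assign_def Let_def by (simp only:)
qed

lemma fold_extra:
  "v \<notin> set xs \<Longrightarrow> g v = 0 \<Longrightarrow> \<forall>e\<in>N. v \<in> e \<Longrightarrow>
   fold (sfap_assign K (E \<union> N)) xs g = fold (sfap_assign K E) xs g"
proof (induction xs arbitrary: g)
  case Nil
  then show ?case by simp
next
  case (Cons w xs)
  have "sfap_assign K (E \<union> N) w g = sfap_assign K E w g"
    using Cons.prems by (intro assign_extra) auto
  moreover have "sfap_assign K E w g v = 0" using Cons.prems by (simp add: assign_other)
  ultimately have "fold (sfap_assign K (E \<union> N)) xs (sfap_assign K (E \<union> N) w g) = fold (sfap_assign K E) xs (sfap_assign K E w g)"
    using Cons.IH[of "sfap_assign K E w g"] Cons.prems by simp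
  then show ?case by (simp only: fold_Cons comp_apply)
qed

lemma freq_step:
  assumes "E \<subseteq> edges_on (set xs)" "v \<notin> set xs"
  shows "sfap_freq K (E \<union> {{u, v} | u. u \<in> set xs \<and> b u}) (xs @ [v]) =
    (sfap_freq K E xs)(v := (if {1..K} - {sfap_freq K E xs u | u. u \<in> set xs \<and> b u \<and> sfap_freq K E xs u \<ge> 1} = {}
        then 0 else Min ({1..K} - {sfap_freq K E xs u | u. u \<in> set xs \<and> b u \<and> sfap_freq K E xs u \<ge> 1})))"
proof -
  define N where "N = {{u, v} | u. u \<in> set xs \<and> b u}"
  define f where "f = sfap_freq K E xs"
  have f_eq: "fold (sfap_assign K (E \<union> N)) xs (\<lambda>_. 0) = f"
    unfolding f_def sfap_freq_def using assms by (intro fold_extra) (auto simp: N_def)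
  have out: "u \<notin> set xs \<Longrightarrow> f u = 0" for u
    unfolding f_def sfap_freq_def by (simp add: fold_assign_outside)
  have seteq: "{f u | u. {u, v} \<in> E \<union> N \<and> f u \<noteq> 0} = {f u | u. u \<in> set xs \<and> b u \<and> f u \<ge> 1}"
  proof (intro equalityI subsetI)
    fix x assume "x \<in> {f u | u. {u, v} \<in> E \<union> N \<and> f u \<noteq> 0}"
    then obtain u where u: "x = f u" "{u, v} \<in> E \<union> N" "f u \<noteq> 0" by auto
    have uxs: "u \<in> set xs" using u(3) out by metis
    show "x \<in> {f u | u. u \<in> set xs \<and> b u \<and> f u \<ge> 1}"
    proof (cases "{u, v} \<in> E")
      case True
      then have "{u, v} \<in> edges_on (set xs)" using assms(1) by auto
      then have "v \<in> set xs" unfolding edges_on_def by (auto simp: doubleton_eq_iff)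
      then show ?thesis using assms(2) by simp
    next
      case False
      then have "{u, v} \<in> N" using u by auto
      then obtain u' where "{u, v} = {u', v}" "u' \<in> set xs" "b u'" unfolding N_def by auto
      then have "u' = u" using assms(2) uxs by (auto simp: doubleton_eq_iff)
      then show ?thesis using u \<open>b u'\<close> uxs by auto
    qed
  next
    fix x assume "x \<in> {f u | u. u \<in> set xs \<and> b u \<and> f u \<ge> 1}"
    then show "x \<in> {f u | u. {u, v} \<in> E \<union> N \<and> f u \<noteq> 0}" unfolding N_def by force
  qed
  have "sfap_freq K (E \<union> N) (xs @ [v]) = sfap_assign K (E \<union> N) v f"
    unfolding sfap_freq_def using f_eq by simp
  then show ?thesis
    unfolding N_def[symmetric] f_def[symmetric] sfap_assign_def Let_def seteq .
qed



lemma finite_edges_on: "finite S \<Longrightarrow> finite (edges_on S)"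
proof -
  assume "finite S"
  have "edges_on S \<subseteq> (\<lambda>(u, v). {u, v}) ` (S \<times> S)" unfolding edges_on_def by auto
  then show ?thesis using \<open>finite S\<close> by (meson finite_SigmaI finite_imageI finite_subset)
qed

definition er :: "real \<Rightarrow> nat set \<Rightarrow> nat set set pmf" where
  "er p S = map_pmf (\<lambda>b. {e \<in> edges_on S. b e}) (Pi_pmf (edges_on S) False (\<lambda>_. bernoulli_pmf p))"

lemma er_support: "E \<in> set_pmf (er p S) \<Longrightarrow> E \<subseteq> edges_on S"
  by (auto simp: er_def)

lemma er_insert:
  assumes fin: "finite S" and v: "v \<notin> S"
  shows "er p (insert v S) = bind_pmf (er p S) (\<lambda>E. map_pmf (\<lambda>b. E \<union> {{u, v} | u. u \<in> S \<and> b u})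
            (Pi_pmf S False (\<lambda>_. bernoulli_pmf p)))"
proof -
  define h where "h = (\<lambda>u::nat. {u, v})"
  define D where "D = h ` S"
  have eq: "edges_on (insert v S) = edges_on S \<union> D"
    unfolding edges_on_def D_def h_def using v by (auto simp: insert_commute)
  have disj: "edges_on S \<inter> D = {}"
    unfolding edges_on_def D_def h_def using v by (auto simp: doubleton_eq_iff)
  have finD: "finite D" unfolding D_def using fin by simp
  have finE: "finite (edges_on S)" using fin by (rule finite_edges_on)
  have inj: "inj_on h S" unfolding inj_on_def h_def using v by (auto simp: doubleton_eq_iff)
  have bij: "bij_betw h S D" unfolding D_def using inj by (simp add: bij_betw_imageI)
  have out: "\<And>x. x \<notin> S \<Longrightarrow> h x \<notin> D" unfolding D_def h_def using v by (auto simp: doubleton_eq_iff)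
  define P1 where "P1 = Pi_pmf (edges_on S) False (\<lambda>_. bernoulli_pmf p)"
  define P2 where "P2 = Pi_pmf D False (\<lambda>_. bernoulli_pmf p)"
  have PiS: "Pi_pmf S False (\<lambda>_. bernoulli_pmf p) = map_pmf (\<lambda>g. g \<circ> h) P2"
    unfolding P2_def by (rule Pi_pmf_bij_betw[OF fin bij out])
  have PiU: "Pi_pmf (edges_on S \<union> D) False (\<lambda>_. bernoulli_pmf p) =
     map_pmf (\<lambda>(f,g) x. if x \<in> edges_on S then f x else g x) (pair_pmf P1 P2)"
    unfolding P1_def P2_def by (rule Pi_pmf_union[OF finE finD disj])
  have key: "{e \<in> edges_on S \<union> D. (if e \<in> edges_on S then f e else g e)} =
      {e \<in> edges_on S. f e} \<union> {{u, v} | u. u \<in> S \<and> (g \<circ> h) u}" for f g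
    unfolding D_def h_def using disj[unfolded D_def h_def] by auto
  have "er p (insert v S) = map_pmf (\<lambda>(f, g). {e \<in> edges_on S. f e} \<union> {{u, v} | u. u \<in> S \<and> (g \<circ> h) u}) (pair_pmf P1 P2)"
    unfolding er_def eq PiU map_pmf_comp using key by (simp add: case_prod_unfold)
  also have "\<dots> = bind_pmf (er p S) (\<lambda>E. map_pmf (\<lambda>b. E \<union> {{u, v} | u. u \<in> S \<and> b u})
            (Pi_pmf S False (\<lambda>_. bernoulli_pmf p)))"
    unfolding er_def PiS P1_def[symmetric]
    by (simp add: pair_pmf_def map_bind_pmf bind_map_pmf map_pmf_def bind_assoc_pmf bind_return_pmf)
  finally show ?thesis .
qed



definition dl :: "nat \<Rightarrow> nat \<Rightarrow> nat list set" where
  "dl n t = {xs. length xs = t \<and> distinct xs \<and> set xs \<subseteq> {1..n}}"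

lemma finite_dl: "finite (dl n t)"
proof -
  have "dl n t \<subseteq> {xs. set xs \<subseteq> {1..n} \<and> length xs = t}" unfolding dl_def by auto
  then show ?thesis using finite_lists_length_eq[of "{1..n}" t] by (meson finite_atLeastAtMost finite_subset)
qed

lemma dl_nonempty: "t \<le> n \<Longrightarrow> dl n t \<noteq> {}"
proof -
  assume "t \<le> n"
  then have "[1..<t+1] \<in> dl n t" unfolding dl_def by auto
  then show ?thesis by auto
qed

lemma card_compl: "xs \<in> dl n t \<Longrightarrow> card ({1..n} - set xs) = n - t"
  unfolding dl_def by (auto simp: card_Diff_subset distinct_card)

lemma pmf_of_set_eqI:
  assumes fin: "finite A" and sup: "set_pmf q \<subseteq> A" and const: "\<And>x y. x \<in> A \<Longrightarrow> y \<in> A \<Longrightarrow> pmf q x = pmf q y"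
  shows "q = pmf_of_set A"
proof -
  have ne: "A \<noteq> {}" using set_pmf_not_empty[of q] sup by blast
  then obtain y where y: "y \<in> A" by auto
  have "(\<Sum>x\<in>A. pmf q x) = 1" by (rule sum_pmf_eq_1[OF fin sup])
  moreover have "(\<Sum>x\<in>A. pmf q x) = (\<Sum>x\<in>A. pmf q y)" using const[OF _ y] by (rule sum.cong[OF refl])
  ultimately have "real (card A) * pmf q y = 1" by simp
  then have c: "pmf q y = 1 / card A" using fin ne by (simp add: field_simps card_gt_0_iff)
  show ?thesis
  proof (rule pmf_eqI)
    fix x
    show "pmf q x = pmf (pmf_of_set A) x"
    proof (cases "x \<in> A")
      case True
      then show ?thesis using const[OF True y] c fin ne by simp
    next
      case False
      then have "x \<notin> set_pmf q" using sup by auto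
      then show ?thesis using False fin ne by (simp add: set_pmf_iff)
    qed
  qed
qed

lemma dl_step:
  assumes tn: "t < n"
  shows "bind_pmf (pmf_of_set (dl n t)) (\<lambda>xs. map_pmf (\<lambda>v. xs @ [v]) (pmf_of_set ({1..n} - set xs)))
         = pmf_of_set (dl n (Suc t))"
proof -
  have ne: "dl n t \<noteq> {}" using tn dl_nonempty by simp
  have Cne: "{1..n} - set xs \<noteq> {}" if "xs \<in> dl n t" for xs
    using card_compl[OF that] tn by (metis card.empty zero_less_diff less_irrefl_nat)
  let ?L = "bind_pmf (pmf_of_set (dl n t)) (\<lambda>xs. map_pmf (\<lambda>v. xs @ [v]) (pmf_of_set ({1..n} - set xs)))"
  have val: "pmf ?L ys = 1 / real (card (dl n t)) * (1 / real (n - t))" if ys: "ys \<in> dl n (Suc t)" for ys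
  proof -
    define zs where "zs = butlast ys"
    define w where "w = last ys"
    have ysne: "ys \<noteq> []" using ys unfolding dl_def by auto
    have yseq: "ys = zs @ [w]" unfolding zs_def w_def using ysne by simp
    have zs: "zs \<in> dl n t" using ys unfolding dl_def yseq by auto
    have w: "w \<in> {1..n} - set zs" using ys unfolding dl_def yseq by auto
    have "pmf ?L ys = (\<Sum>xs\<in>dl n t. pmf (map_pmf (\<lambda>v. xs @ [v]) (pmf_of_set ({1..n} - set xs))) ys) / card (dl n t)"
      using ne finite_dl by (simp add: pmf_bind integral_pmf_of_set)
    also have "(\<Sum>xs\<in>dl n t. pmf (map_pmf (\<lambda>v. xs @ [v]) (pmf_of_set ({1..n} - set xs))) ys)
        = (\<Sum>xs\<in>dl n t. if xs = zs then 1 / real (n - t) else 0)"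
    proof (rule sum.cong[OF refl])
      fix xs assume xs: "xs \<in> dl n t"
      show "pmf (map_pmf (\<lambda>v. xs @ [v]) (pmf_of_set ({1..n} - set xs))) ys = (if xs = zs then 1 / real (n - t) else 0)"
      proof (cases "xs = zs")
        case True
        have "pmf (map_pmf (\<lambda>v. xs @ [v]) (pmf_of_set ({1..n} - set xs))) ys
             = pmf (pmf_of_set ({1..n} - set xs)) w"
          unfolding yseq True by (rule pmf_map_inj') (auto simp: inj_def)
        also have "\<dots> = 1 / real (n - t)" using w True Cne[OF xs] card_compl[OF xs] by simp
        finally show ?thesis using True by simp
      next
        case False
        have "ys \<notin> set_pmf (map_pmf (\<lambda>v. xs @ [v]) (pmf_of_set ({1..n} - set xs)))"
          using False unfolding yseq by auto
        then show ?thesis using False by (metis set_pmf_iff)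
      qed
    qed
    also have "\<dots> = 1 / real (n - t)" using zs finite_dl by simp
    finally show ?thesis by simp
  qed
  show ?thesis
  proof (rule pmf_of_set_eqI[OF finite_dl])
    show "set_pmf ?L \<subseteq> dl n (Suc t)"
    proof
      fix ys assume "ys \<in> set_pmf ?L"
      then obtain xs v where xs: "xs \<in> dl n t" and v: "v \<in> set_pmf (pmf_of_set ({1..n} - set xs))" and yseq: "ys = xs @ [v]"
        using ne finite_dl by auto
      have "v \<in> {1..n} - set xs" using v Cne[OF xs] by simp
      then show "ys \<in> dl n (Suc t)" using xs yseq unfolding dl_def by auto
    qed
  next
    fix x y assume "x \<in> dl n (Suc t)" "y \<in> dl n (Suc t)"
    then show "pmf ?L x = pmf ?L y" using val by simp
  qed
qed



definition inv :: "nat \<Rightarrow> nat \<Rightarrow> real \<Rightarrow> nat \<Rightarrow> explore_state pmf" where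
  "inv n K p t = bind_pmf (pmf_of_set (dl n t))
     (\<lambda>xs. bind_pmf (er p (set xs)) (\<lambda>E. return_pmf (set xs, sfap_freq K E xs, E)))"

lemma step_xs:
  assumes xs: "xs \<in> dl n t" and tn: "t < n"
  shows "bind_pmf (er p (set xs)) (\<lambda>E. explore_step n K p (set xs, sfap_freq K E xs, E)) =
    bind_pmf (pmf_of_set ({1..n} - set xs)) (\<lambda>v. bind_pmf (er p (set (xs @ [v])))
       (\<lambda>E. return_pmf (set (xs @ [v]), sfap_freq K E (xs @ [v]), E)))"
proof -
  have Cne: "{1..n} - set xs \<noteq> {}"
    using card_compl[OF xs] tn by (metis card.empty zero_less_diff less_irrefl_nat)
  have fin: "finite (set xs)" by simp
  let ?Pi = "Pi_pmf (set xs) False (\<lambda>_. bernoulli_pmf p)"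
  let ?G = "\<lambda>E v b. return_pmf (insert v (set xs),
      (sfap_freq K E xs)(v := (if {1..K} - {sfap_freq K E xs u | u. u \<in> set xs \<and> b u \<and> sfap_freq K E xs u \<ge> 1} = {}
        then 0 else Min ({1..K} - {sfap_freq K E xs u | u. u \<in> set xs \<and> b u \<and> sfap_freq K E xs u \<ge> 1}))),
      E \<union> {{u, v} | u. u \<in> set xs \<and> b u})"
  have "bind_pmf (er p (set xs)) (\<lambda>E. explore_step n K p (set xs, sfap_freq K E xs, E)) =
     bind_pmf (er p (set xs)) (\<lambda>E. bind_pmf (pmf_of_set ({1..n} - set xs)) (\<lambda>v. bind_pmf ?Pi (\<lambda>b. ?G E v b)))"
    by (intro bind_pmf_cong refl) (simp only: explore_step_def prod.case Let_def if_not_P[OF Cne])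
  also have "\<dots> = bind_pmf (pmf_of_set ({1..n} - set xs)) (\<lambda>v. bind_pmf (er p (set xs)) (\<lambda>E. bind_pmf ?Pi (\<lambda>b. ?G E v b)))"
    by (rule bind_commute_pmf)
  also have "\<dots> = bind_pmf (pmf_of_set ({1..n} - set xs)) (\<lambda>v. bind_pmf (er p (set (xs @ [v])))
       (\<lambda>E. return_pmf (set (xs @ [v]), sfap_freq K E (xs @ [v]), E)))"
  proof (rule bind_pmf_cong[OF refl])
    fix v assume "v \<in> set_pmf (pmf_of_set ({1..n} - set xs))"
    then have v: "v \<notin> set xs" using Cne by simp
    have "bind_pmf (er p (set (xs @ [v]))) (\<lambda>E. return_pmf (set (xs @ [v]), sfap_freq K E (xs @ [v]), E))
      = bind_pmf (er p (set xs)) (\<lambda>E. bind_pmf ?Pi (\<lambda>b. return_pmf (insert v (set xs),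
           sfap_freq K (E \<union> {{u, v} | u. u \<in> set xs \<and> b u}) (xs @ [v]), E \<union> {{u, v} | u. u \<in> set xs \<and> b u})))"
      by (simp add: er_insert[OF fin v] bind_map_pmf bind_assoc_pmf bind_return_pmf)
    also have "\<dots> = bind_pmf (er p (set xs)) (\<lambda>E. bind_pmf ?Pi (\<lambda>b. ?G E v b))"
    proof (rule bind_pmf_cong[OF refl])
      fix E assume "E \<in> set_pmf (er p (set xs))"
      then have Esub: "E \<subseteq> edges_on (set xs)" by (rule er_support)
      show "bind_pmf ?Pi (\<lambda>b. return_pmf (insert v (set xs),
           sfap_freq K (E \<union> {{u, v} | u. u \<in> set xs \<and> b u}) (xs @ [v]), E \<union> {{u, v} | u. u \<in> set xs \<and> b u}))
           = bind_pmf ?Pi (\<lambda>b. ?G E v b)"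
        by (simp only: freq_step[OF Esub v])
    qed
    finally show "bind_pmf (er p (set xs)) (\<lambda>E. bind_pmf ?Pi (\<lambda>b. ?G E v b)) =
       bind_pmf (er p (set (xs @ [v]))) (\<lambda>E. return_pmf (set (xs @ [v]), sfap_freq K E (xs @ [v]), E))" by simp
  qed
  finally show ?thesis .
qed

lemma iter_inv: "t \<le> n \<Longrightarrow> explore_iter n K p t = inv n K p t"
proof (induction t)
  case 0
  have "dl n 0 = {[]}" unfolding dl_def by auto
  moreover have "edges_on {} = {}" unfolding edges_on_def by auto
  ultimately show ?case
    by (simp add: inv_def er_def sfap_freq_def pmf_of_set_singleton bind_return_pmf)
next
  case (Suc t)
  then have tn: "t < n" by simp
  have "explore_iter n K p (Suc t) = bind_pmf (inv n K p t) (explore_step n K p)"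
    using Suc by simp
  also have "\<dots> = bind_pmf (pmf_of_set (dl n t)) (\<lambda>xs. bind_pmf (er p (set xs))
       (\<lambda>E. explore_step n K p (set xs, sfap_freq K E xs, E)))"
    by (simp add: inv_def bind_assoc_pmf bind_return_pmf)
  also have "\<dots> = bind_pmf (pmf_of_set (dl n t)) (\<lambda>xs. bind_pmf (pmf_of_set ({1..n} - set xs))
       (\<lambda>v. bind_pmf (er p (set (xs @ [v]))) (\<lambda>E. return_pmf (set (xs @ [v]), sfap_freq K E (xs @ [v]), E))))"
    using finite_dl dl_nonempty[of t n] tn
    by (intro bind_pmf_cong refl step_xs) auto
  also have "\<dots> = inv n K p (Suc t)"
    unfolding inv_def dl_step[OF tn, symmetric]
    by (simp add: bind_map_pmf bind_assoc_pmf)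
  finally show ?case .
qed



lemma dl_perm: "dl n n = permutations_of_set {1..n}"
proof (intro equalityI subsetI)
  fix xs assume "xs \<in> dl n n"
  then have "length xs = n" "distinct xs" "set xs \<subseteq> {1..n}" unfolding dl_def by auto
  moreover then have "card (set xs) = card {1..n}" by (simp add: distinct_card)
  ultimately have "set xs = {1..n}" using card_subset_eq[of "{1..n}" "set xs"] by simp
  then show "xs \<in> permutations_of_set {1..n}" using \<open>distinct xs\<close> unfolding permutations_of_set_def by auto
next
  fix xs assume "xs \<in> permutations_of_set {1..n}"
  then have "set xs = {1..n}" "distinct xs" unfolding permutations_of_set_def by auto
  moreover then have "length xs = n" using distinct_card[of xs] by simp
  ultimately show "xs \<in> dl n n" unfolding dl_def by simp
qed

lemma er_full: "er p {1..n} = erdos_renyi n p"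
  unfolding er_def erdos_renyi_def edges_on_def all_edges_def ..

theorem proposition3:
  fixes n K :: nat and p :: real
  assumes "n \<ge> 1" and "K \<ge> 1" and "0 \<le> p" and "p \<le> 1"
  shows "explore_output n K p = sfap_model n K p"
proof -
  have pne: "permutations_of_set {1..n} \<noteq> {}" using dl_nonempty[of n n] dl_perm by simp
  have pfin: "finite (permutations_of_set {1..n})" by simp
  have "explore_output n K p = bind_pmf (pmf_of_set (permutations_of_set {1..n}))
     (\<lambda>xs. bind_pmf (er p (set xs)) (\<lambda>E. return_pmf (E, map (\<lambda>i. {v \<in> set xs. sfap_freq K E xs v = i}) [1..<K+1])))"
    unfolding explore_output_def iter_inv[OF order_refl] inv_def dl_perm
    by (simp add: map_bind_pmf)
  also have "\<dots> = bind_pmf (pmf_of_set (permutations_of_set {1..n}))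
     (\<lambda>xs. bind_pmf (erdos_renyi n p) (\<lambda>E. return_pmf (E, map (\<lambda>i. {v \<in> {1..n}. sfap_freq K E xs v = i}) [1..<K+1])))"
  proof (rule bind_pmf_cong[OF refl])
    fix xs assume "xs \<in> set_pmf (pmf_of_set (permutations_of_set {1..n}))"
    then have sx: "set xs = {1..n}" using pne pfin by (simp add: permutations_of_set_def)
    show "bind_pmf (er p (set xs)) (\<lambda>E. return_pmf (E, map (\<lambda>i. {v \<in> set xs. sfap_freq K E xs v = i}) [1..<K+1])) =
      bind_pmf (erdos_renyi n p) (\<lambda>E. return_pmf (E, map (\<lambda>i. {v \<in> {1..n}. sfap_freq K E xs v = i}) [1..<K+1]))"
      by (simp only: er_full sx)
  qed
  also have "\<dots> = sfap_model n K p"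
    unfolding sfap_model_def Let_def by (rule bind_commute_pmf)
  finally show ?thesis .
qed


end
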